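(* Let $G=(V,E)$ be a graph with $n=|V|$ vertices and maximum degree at most $B$, and let $k\le n$ be a nonnegative integer. Construct the graph $G'=(V',E')$ as follows. For each $v\in V$ add a copy of the complete bipartite graph $K_{B+1,B+2}$ (the choice gadget of $v$, with smaller side $S_v$ of $B+1$ vertices and larger side $L_v$ of $B+2$ vertices); add a vertex $v_d$ together with $B-d(v)+1$ new pendant vertices (leaves) adjacent only to $v_d$, where $d(v)$ is the degree of $v$ in $G$; and for each $u\in N[v]$ (closed neighbourhood of $v$ in $G$) add an edge from a vertex of $L_v$ to $u_d$, using distinct vertices of $L_v$ for distinct $u\in N[v]$. Define capacities $c(v_d)=B+1$ for all $v\in V$ and $c(w)=\deg_{G'}(w)$ for all other vertices $w$ of $G'$. Then $G'$ has maximum degree $B+2$, $|E'|=n(B+2)^2$, and $G$ has a dominating set of size at most $k$ if and only if $G'$ has a capacitated vertex cover (with respect to $c$) of size at most $|E'|/(B+2)+k=n(B+2)+k$.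
   Context: A dominating set of $G$ is a set $S\subseteq V$ such that every vertex of $G$ is in $S$ or adjacent to a vertex of $S$. Given a graph with vertex capacities $c:V\to\mathbb{Z}_{\ge 0}$, a capacitated vertex cover is a set $C$ of vertices together with an assignment of every edge to one of its endpoints lying in $C$ such that each $w\in C$ is assigned at most $c(w)$ edges. *)

theory Defs
  imports Main
begin

definition simple_graph :: "'a set \<Rightarrow> 'a set set \<Rightarrow> bool" where
  "simple_graph V E \<longleftrightarrow> finite V \<and>
     (\<forall>e\<in>E. \<exists>u w. u \<noteq> w \<and> u \<in> V \<and> w \<in> V \<and> e = {u, w})"

definition gdeg :: "'a set set \<Rightarrow> 'a \<Rightarrow> nat" where
  "gdeg E v = card {e \<in> E. v \<in> e}"

definition closed_nbhd :: "'a set \<Rightarrow> 'a set set \<Rightarrow> 'a \<Rightarrow> 'a set" where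
  "closed_nbhd V E v = insert v {u \<in> V. {u, v} \<in> E}"

definition dominating_set :: "'a set \<Rightarrow> 'a set set \<Rightarrow> 'a set \<Rightarrow> bool" where
  "dominating_set V E S \<longleftrightarrow> S \<subseteq> V \<and> (\<forall>v\<in>V. v \<in> S \<or> (\<exists>u\<in>S. {u, v} \<in> E))"

definition capacitated_vertex_cover ::
  "'v set \<Rightarrow> 'v set set \<Rightarrow> ('v \<Rightarrow> nat) \<Rightarrow> 'v set \<Rightarrow> bool" where
  "capacitated_vertex_cover V E c C \<longleftrightarrow> C \<subseteq> V \<and>
     (\<exists>a :: 'v set \<Rightarrow> 'v. (\<forall>e\<in>E. a e \<in> e \<and> a e \<in> C) \<and>
                      (\<forall>w\<in>C. card {e \<in> E. a e = w} \<le> c w))"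

text \<open>Vertices of the constructed graph G': for each v, the small side S_v (S v i, i < B+1),
  the large side L_v (L v j, j < B+2), the vertex v_d (D v) and the leaves (Leaf v i).\<close>

datatype 'a gvert = S 'a nat | L 'a nat | D 'a | Leaf 'a nat

definition red_vertices :: "'a set \<Rightarrow> 'a set set \<Rightarrow> nat \<Rightarrow> 'a gvert set" where
  "red_vertices V E B = (\<Union>v\<in>V.
      {S v i | i. i < B + 1} \<union> {L v j | j. j < B + 2} \<union> {D v}
      \<union> {Leaf v i | i. i < B - gdeg E v + 1})"

text \<open>\<sigma> v u is the index of the vertex of L_v joined to u_d, for u in N[v].\<close>

definition red_edges ::
  "'a set \<Rightarrow> 'a set set \<Rightarrow> nat \<Rightarrow> ('a \<Rightarrow> 'a \<Rightarrow> nat) \<Rightarrow> 'a gvert set set" where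
  "red_edges V E B \<sigma> = (\<Union>v\<in>V.
      {{S v i, L v j} | i j. i < B + 1 \<and> j < B + 2}
      \<union> {{D v, Leaf v i} | i. i < B - gdeg E v + 1}
      \<union> {{L v (\<sigma> v u), D u} | u. u \<in> closed_nbhd V E v})"

definition red_cap :: "nat \<Rightarrow> 'a gvert set set \<Rightarrow> 'a gvert \<Rightarrow> nat" where
  "red_cap B E' w = (case w of D _ \<Rightarrow> B + 1 | _ \<Rightarrow> gdeg E' w)"

end

theory Submission
  imports Defs
begin


locale red =
  fixes V :: "'a set" and E :: "'a set set" and B :: nat and \<sigma> :: "'a \<Rightarrow> 'a \<Rightarrow> nat"
  assumes graph: "simple_graph V E"
    and maxdeg: "\<forall>v\<in>V. gdeg E v \<le> B"
    and \<sigma>_range: "\<forall>v\<in>V. \<forall>u\<in>closed_nbhd V E v. \<sigma> v u < B + 2"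
    and \<sigma>_inj: "\<forall>v\<in>V. inj_on (\<sigma> v) (closed_nbhd V E v)"
begin

abbreviation "N \<equiv> closed_nbhd V E"
abbreviation "d \<equiv> gdeg E"
abbreviation "Ep \<equiv> red_edges V E B \<sigma>"
abbreviation "Vp \<equiv> red_vertices V E B"

definition "Gd v = (\<lambda>(i,j). {S v i, L v j}) ` ({..<B+1} \<times> {..<B+2})"
definition "Lf v = (\<lambda>i. {D v, Leaf v i}) ` {..<B - d v + 1}"
definition "Md v = (\<lambda>u. {L v (\<sigma> v u), D u}) ` N v"

lemma finV: "finite V" using graph by (simp add: simple_graph_def)

lemma E_edge: "e \<in> E \<Longrightarrow> \<exists>x y. x \<noteq> y \<and> x \<in> V \<and> y \<in> V \<and> e = {x,y}"
  using graph by (auto simp: simple_graph_def)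

lemma N_sub: "N v \<subseteq> insert v V" by (auto simp: closed_nbhd_def)
lemma N_subV: "v \<in> V \<Longrightarrow> N v \<subseteq> V" by (auto simp: closed_nbhd_def)
lemma N_self: "v \<in> N v" by (auto simp: closed_nbhd_def)
lemma finN: "finite (N v)" using N_sub finV by (meson finite_insert finite_subset)

lemma N_sym: "u \<in> V \<Longrightarrow> v \<in> V \<Longrightarrow> u \<in> N v \<longleftrightarrow> v \<in> N u"
  by (auto simp: closed_nbhd_def insert_commute)

lemma loopfree: "{v} \<notin> E"
proof
  assume "{v} \<in> E"
  then obtain x y where "x \<noteq> y" "{v} = {x,y}" using E_edge by blast
  then show False by (metis insertI1 insert_commute singletonD)
qed

lemma card_N: assumes "v \<in> V" shows "card (N v) = d v + 1"
proof -
  let ?A = "{u \<in> V. {u, v} \<in> E}"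
  have vA: "v \<notin> ?A" using loopfree by auto
  have finA: "finite ?A" using finV by auto
  have "bij_betw (\<lambda>u. {u,v}) ?A {e \<in> E. v \<in> e}"
  proof (rule bij_betwI')
    fix x y assume "x \<in> ?A" "y \<in> ?A"
    then show "({x, v} = {y, v}) = (x = y)" using loopfree by (auto simp: doubleton_eq_iff)
  next
    fix x assume "x \<in> ?A" then show "{x, v} \<in> {e \<in> E. v \<in> e}" by auto
  next
    fix e assume "e \<in> {e \<in> E. v \<in> e}"
    then obtain x y where "x \<noteq> y" "x \<in> V" "y \<in> V" "e = {x,y}" "e \<in> E" "v \<in> e" using E_edge by blast
    then show "\<exists>x\<in>?A. e = {x, v}" by (auto simp: insert_commute)
  qed
  then have "card ?A = d v" unfolding gdeg_def by (rule bij_betw_same_card)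
  then show ?thesis using vA finA by (simp add: closed_nbhd_def)
qed

lemma Ep_alt: "Ep = (\<Union>v\<in>V. Gd v \<union> Lf v \<union> Md v)"
  unfolding red_edges_def Gd_def Lf_def Md_def by (auto; blast)

lemma Vp_alt: "Vp = (\<Union>v\<in>V. S v ` {..<B+1} \<union> L v ` {..<B+2} \<union> {D v} \<union> Leaf v ` {..<B - d v + 1})"
  unfolding red_vertices_def by (auto; blast)

lemma finEp: "finite Ep" unfolding Ep_alt using finV finN by (auto simp: Gd_def Lf_def Md_def)
lemma finVp: "finite Vp" unfolding Vp_alt using finV by auto

end


context red begin

lemma inj_S: "inj (S v)" and inj_L: "inj (L v)" and inj_Leaf: "inj (Leaf v)"
  by (auto simp: inj_def)

lemma card_piece: assumes "v \<in> V" shows "card (Gd v \<union> Lf v \<union> Md v) = (B+2)^2"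
proof -
  have dv: "d v \<le> B" using maxdeg assms by auto
  have cG: "card (Gd v) = (B+1)*(B+2)" unfolding Gd_def
    by (subst card_image) (auto simp: inj_on_def doubleton_eq_iff card_cartesian_product)
  have cL: "card (Lf v) = B - d v + 1" unfolding Lf_def
    by (subst card_image) (auto simp: inj_on_def doubleton_eq_iff)
  have cM: "card (Md v) = d v + 1" unfolding Md_def using card_N[OF assms]
    by (subst card_image) (auto simp: inj_on_def doubleton_eq_iff)
  have fin: "finite (Gd v)" "finite (Lf v)" "finite (Md v)" using finN by (auto simp: Gd_def Lf_def Md_def)
  have d1: "Gd v \<inter> Lf v = {}" "(Gd v \<union> Lf v) \<inter> Md v = {}"
    by (auto simp: Gd_def Lf_def Md_def doubleton_eq_iff)
  have "card (Gd v \<union> Lf v \<union> Md v) = (B+1)*(B+2) + (B - d v + 1) + (d v + 1)"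
    using fin d1 cG cL cM by (simp add: card_Un_disjoint)
  also have "\<dots> = (B+2)^2" using dv by (simp add: power2_eq_square algebra_simps)
  finally show ?thesis .
qed

lemma card_Ep: "card Ep = card V * (B+2)^2"
proof -
  have "card Ep = (\<Sum>v\<in>V. card (Gd v \<union> Lf v \<union> Md v))"
    unfolding Ep_alt
  proof (rule card_UN_disjoint)
    show "finite V" by (rule finV)
    show "\<forall>i\<in>V. finite (Gd i \<union> Lf i \<union> Md i)" using finN by (auto simp: Gd_def Lf_def Md_def)
    show "\<forall>i\<in>V. \<forall>j\<in>V. i \<noteq> j \<longrightarrow> (Gd i \<union> Lf i \<union> Md i) \<inter> (Gd j \<union> Lf j \<union> Md j) = {}"
      by (auto simp: Gd_def Lf_def Md_def doubleton_eq_iff)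
  qed
  also have "\<dots> = (\<Sum>v\<in>V. (B+2)^2)" using card_piece by simp
  finally show ?thesis by simp
qed

lemma deg_S: "gdeg Ep (S v i) \<le> B + 2"
proof -
  have "{e \<in> Ep. S v i \<in> e} \<subseteq> (\<lambda>j. {S v i, L v j}) ` {..<B+2}"
    unfolding Ep_alt by (auto simp: Gd_def Lf_def Md_def)
  then have "card {e \<in> Ep. S v i \<in> e} \<le> card ((\<lambda>j. {S v i, L v j}) ` {..<B+2})"
    by (intro card_mono) auto
  also have "\<dots> \<le> B + 2" using card_image_le[of "{..<B+2}"] by simp
  finally show ?thesis by (simp add: gdeg_def)
qed

lemma deg_Leaf: "gdeg Ep (Leaf v i) \<le> B + 2"
proof -
  have "{e \<in> Ep. Leaf v i \<in> e} \<subseteq> {{D v, Leaf v i}}"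
    unfolding Ep_alt by (auto simp: Gd_def Lf_def Md_def)
  then have "card {e \<in> Ep. Leaf v i \<in> e} \<le> card {{D v, Leaf v i}}"
    by (intro card_mono) auto
  then show ?thesis by (simp add: gdeg_def)
qed

lemma deg_L: assumes "v \<in> V" shows "gdeg Ep (L v j) \<le> B + 2"
proof -
  let ?U = "{u \<in> N v. \<sigma> v u = j}"
  have fU: "finite ?U" using finN by auto
  have allU: "\<forall>a\<in>?U. \<forall>b\<in>?U. a = b" using \<sigma>_inj assms by (auto simp: inj_on_def)
  have cU: "card ?U \<le> 1"
    unfolding One_nat_def card_le_Suc0_iff_eq[OF fU] using allU by blast
  let ?A = "(\<lambda>i. {S v i, L v j}) ` {..<B+1}"
  let ?M = "(\<lambda>u. {L v j, D u}) ` ?U"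
  have sub: "{e \<in> Ep. L v j \<in> e} \<subseteq> ?A \<union> ?M"
  proof
    fix e assume "e \<in> {e \<in> Ep. L v j \<in> e}"
    then obtain w where w: "w \<in> V" "e \<in> Gd w \<union> Lf w \<union> Md w" and Le: "L v j \<in> e" unfolding Ep_alt by blast
    show "e \<in> ?A \<union> ?M"
    proof (cases "e \<in> Gd w")
      case True
      then obtain i j' where "i < B+1" "e = {S w i, L w j'}" by (auto simp: Gd_def)
      then show ?thesis using Le by auto
    next
      case False
      then have "e \<in> Lf w \<or> e \<in> Md w" using w by blast
      then show ?thesis
      proof
        assume "e \<in> Lf w" then show ?thesis using Le by (auto simp: Lf_def)
      next
        assume "e \<in> Md w"
        then obtain u where "u \<in> N w" "e = {L w (\<sigma> w u), D u}" by (auto simp: Md_def)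
        then show ?thesis using Le by auto
      qed
    qed
  qed
  have fA: "finite ?A" by simp
  have fM: "finite ?M" using finN by simp
  have "card {e \<in> Ep. L v j \<in> e} \<le> card (?A \<union> ?M)"
    using sub fA fM by (intro card_mono) auto
  also have "\<dots> \<le> card ?A + card ?M" by (rule card_Un_le)
  also have "card ?A \<le> B + 1" using card_image_le[of "{..<B+1}" "\<lambda>i. {S v i, L v j}"] by simp
  also have "card ?M \<le> 1" using card_image_le[of ?U "\<lambda>u. {L v j, D u}"] cU finN by simp
  finally show ?thesis by (simp add: gdeg_def)
qed

lemma deg_D_set: assumes "u \<in> V"
  shows "{e \<in> Ep. D u \<in> e} = Lf u \<union> (\<lambda>v. {L v (\<sigma> v u), D u}) ` N u"
proof
  show "{e \<in> Ep. D u \<in> e} \<subseteq> Lf u \<union> (\<lambda>v. {L v (\<sigma> v u), D u}) ` N u"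
  proof
    fix e assume "e \<in> {e \<in> Ep. D u \<in> e}"
    then obtain w where w: "w \<in> V" "e \<in> Gd w \<union> Lf w \<union> Md w" and De: "D u \<in> e" unfolding Ep_alt by blast
    show "e \<in> Lf u \<union> (\<lambda>v. {L v (\<sigma> v u), D u}) ` N u"
    proof (cases "e \<in> Gd w")
      case True
      then obtain i j' where "e = {S w i, L w j'}" by (auto simp: Gd_def)
      then show ?thesis using De by auto
    next
      case False
      then have "e \<in> Lf w \<or> e \<in> Md w" using w by blast
      then show ?thesis
      proof
        assume "e \<in> Lf w" then show ?thesis using De by (auto simp: Lf_def)
      next
        assume "e \<in> Md w"
        then obtain x where x: "x \<in> N w" "e = {L w (\<sigma> w x), D x}" by (auto simp: Md_def)
        then have "x = u" using De by auto
        then have "w \<in> N u" using x N_sym[OF assms w(1)] by simp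
        then show ?thesis using x \<open>x = u\<close> by auto
      qed
    qed
  qed
next
  show "Lf u \<union> (\<lambda>v. {L v (\<sigma> v u), D u}) ` N u \<subseteq> {e \<in> Ep. D u \<in> e}"
  proof
    fix e assume "e \<in> Lf u \<union> (\<lambda>v. {L v (\<sigma> v u), D u}) ` N u"
    then show "e \<in> {e \<in> Ep. D u \<in> e}"
    proof
      assume "e \<in> Lf u" then show ?thesis unfolding Ep_alt using assms by (auto simp: Lf_def)
    next
      assume "e \<in> (\<lambda>v. {L v (\<sigma> v u), D u}) ` N u"
      then obtain v where v: "v \<in> N u" "e = {L v (\<sigma> v u), D u}" by auto
      have vV: "v \<in> V" using v N_subV[OF assms] by auto
      have "u \<in> N v" using v N_sym[OF assms vV] by simp
      then have "e \<in> Md v" using v by (auto simp: Md_def)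
      then show ?thesis unfolding Ep_alt using vV v by auto
    qed
  qed
qed

lemma deg_D: assumes "u \<in> V" shows "gdeg Ep (D u) = B + 2"
proof -
  have du: "d u \<le> B" using maxdeg assms by auto
  have cL: "card (Lf u) = B - d u + 1" unfolding Lf_def
    by (subst card_image) (auto simp: inj_on_def doubleton_eq_iff)
  have cM: "card ((\<lambda>v. {L v (\<sigma> v u), D u}) ` N u) = d u + 1" using card_N[OF assms]
    by (subst card_image) (auto simp: inj_on_def doubleton_eq_iff)
  have "Lf u \<inter> (\<lambda>v. {L v (\<sigma> v u), D u}) ` N u = {}" by (auto simp: Lf_def doubleton_eq_iff)
  then have "gdeg Ep (D u) = card (Lf u) + card ((\<lambda>v. {L v (\<sigma> v u), D u}) ` N u)"
    unfolding gdeg_def deg_D_set[OF assms] using finN by (intro card_Un_disjoint) (auto simp: Lf_def)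
  then show ?thesis using cL cM du by simp
qed

lemma maxdeg_all: "\<forall>w\<in>Vp. gdeg Ep w \<le> B + 2"
proof
  fix w assume "w \<in> Vp"
  then show "gdeg Ep w \<le> B + 2" unfolding Vp_alt
    using deg_S deg_L deg_D deg_Leaf by auto
qed

end



definition own :: "'a gvert \<Rightarrow> 'a" where
  "own x = (case x of S v _ \<Rightarrow> v | L v _ \<Rightarrow> v | D v \<Rightarrow> v | Leaf v _ \<Rightarrow> v)"

definition isD :: "'a gvert \<Rightarrow> bool" where
  "isD x = (case x of D _ \<Rightarrow> True | _ \<Rightarrow> False)"

context red begin

lemma Gd_Ep: assumes "v \<in> V" "i < B+1" "j < B+2" shows "{S v i, L v j} \<in> Ep"
proof -
  have "{S v i, L v j} \<in> Gd v" unfolding Gd_def using assms by force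
  then show ?thesis unfolding Ep_alt using assms by blast
qed

lemma Lf_Ep: assumes "v \<in> V" shows "{D v, Leaf v 0} \<in> Ep"
proof -
  have "{D v, Leaf v 0} \<in> Lf v" unfolding Lf_def by force
  then show ?thesis unfolding Ep_alt using assms by blast
qed

lemma Md_Ep: assumes "v \<in> V" "u \<in> N v" shows "{L v (\<sigma> v u), D u} \<in> Ep"
proof -
  have "{L v (\<sigma> v u), D u} \<in> Md v" unfolding Md_def using assms by force
  then show ?thesis unfolding Ep_alt using assms by blast
qed

lemma fwd:
  assumes dom: "dominating_set V E Sd" and cSd: "card Sd \<le> k"
  shows "\<exists>C. capacitated_vertex_cover Vp Ep (red_cap B Ep) C \<and> card C \<le> card V * (B + 2) + k"
proof -
  have SdV: "Sd \<subseteq> V" using dom by (simp add: dominating_set_def)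
  define F where "F v = (if v \<in> Sd then L v ` {..<B+2} else S v ` {..<B+1}) \<union> {D v}" for v
  define C where "C = (\<Union>v\<in>V. F v)"
  define a where "a e = (if \<exists>x\<in>e. x \<in> C \<and> \<not> isD x then (SOME x. x \<in> e \<and> x \<in> C \<and> \<not> isD x)
                         else (SOME x. x \<in> e \<and> x \<in> C))" for e
  have FC: "v \<in> V \<Longrightarrow> x \<in> F v \<Longrightarrow> x \<in> C" for v x unfolding C_def by blast
  have DC: "u \<in> V \<Longrightarrow> D u \<in> C" for u using FC[of u "D u"] by (simp add: F_def)
  have cover: "\<exists>x\<in>e. x \<in> C" if "e \<in> Ep" for e
  proof -
    obtain w where w: "w \<in> V" "e \<in> Gd w \<union> Lf w \<union> Md w" using \<open>e \<in> Ep\<close> unfolding Ep_alt by blast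
    show ?thesis
    proof (cases "e \<in> Gd w")
      case True
      then obtain i j where ij: "i < B+1" "j < B+2" "e = {S w i, L w j}" by (auto simp: Gd_def)
      show ?thesis
      proof (cases "w \<in> Sd")
        case True
        then have "L w j \<in> C" using ij w FC[of w "L w j"] by (simp add: F_def)
        then show ?thesis using ij by auto
      next
        case False
        then have "S w i \<in> C" using ij w FC[of w "S w i"] by (simp add: F_def)
        then show ?thesis using ij by auto
      qed
    next
      case False
      then have "e \<in> Lf w \<or> e \<in> Md w" using w by blast
      then show ?thesis
      proof
        assume "e \<in> Lf w" then show ?thesis using DC w by (auto simp: Lf_def)
      next
        assume "e \<in> Md w"
        then obtain u where "u \<in> N w" "e = {L w (\<sigma> w u), D u}" by (auto simp: Md_def)
        then show ?thesis using DC N_subV[OF w(1)] by auto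
      qed
    qed
  qed
  have a_ok: "a e \<in> e \<and> a e \<in> C" if "e \<in> Ep" for e
  proof (cases "\<exists>x\<in>e. x \<in> C \<and> \<not> isD x")
    case True
    then have "\<exists>x. x \<in> e \<and> x \<in> C \<and> \<not> isD x" by blast
    from someI_ex[OF this] show ?thesis unfolding a_def if_P[OF True] by blast
  next
    case False
    have "\<exists>x. x \<in> e \<and> x \<in> C" using cover[OF that] by blast
    from someI_ex[OF this] show ?thesis unfolding a_def if_not_P[OF False] .
  qed
  have a_nD: "\<not> isD (a e)" if "x \<in> e" "x \<in> C" "\<not> isD x" for e x
  proof -
    have "\<exists>x. x \<in> e \<and> x \<in> C \<and> \<not> isD x" using that by blast
    from someI_ex[OF this] that show ?thesis by (auto simp: a_def)
  qed
  have FVp: "F v \<subseteq> Vp" if "v \<in> V" for v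
  proof
    fix x assume "x \<in> F v"
    then have "x \<in> S v ` {..<B+1} \<union> L v ` {..<B+2} \<union> {D v} \<union> Leaf v ` {..<B - d v + 1}"
      by (auto simp: F_def split: if_splits)
    then show "x \<in> Vp" unfolding Vp_alt using that by blast
  qed
  have CVp: "C \<subseteq> Vp" unfolding C_def using FVp by blast
  have cap: "card {e \<in> Ep. a e = w} \<le> red_cap B Ep w" if "w \<in> C" for w
  proof (cases w)
    case (D u)
    obtain v0 where "v0 \<in> V" "w \<in> F v0" using \<open>w \<in> C\<close> unfolding C_def by blast
    then have uV: "u \<in> V" using D by (auto simp: F_def split: if_splits)
    obtain v where v: "v \<in> Sd" "v \<in> N u"
      using dom uV unfolding dominating_set_def closed_nbhd_def by blast
    have vV: "v \<in> V" using v SdV by auto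
    have uNv: "u \<in> N v" using v N_sym[OF uV vV] by simp
    let ?e0 = "{L v (\<sigma> v u), D u}"
    have e0: "?e0 \<in> {e \<in> Ep. D u \<in> e}" using Md_Ep[OF vV uNv] by simp
    have "\<sigma> v u < B + 2" using \<sigma>_range vV uNv by auto
    then have LC: "L v (\<sigma> v u) \<in> C" using v vV FC[of v "L v (\<sigma> v u)"] by (simp add: F_def)
    have "\<not> isD (a ?e0)" by (rule a_nD[OF _ LC]) (auto simp: isD_def)
    then have "a ?e0 \<noteq> D u" by (auto simp: isD_def)
    then have "{e \<in> Ep. a e = w} \<subseteq> {e \<in> Ep. D u \<in> e} - {?e0}"
      using a_ok D by (auto; metis)
    then have "card {e \<in> Ep. a e = w} \<le> card ({e \<in> Ep. D u \<in> e} - {?e0})"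
      using finEp by (intro card_mono) auto
    also have "\<dots> = B + 1" using e0 deg_D[OF uV] finEp by (simp add: gdeg_def)
    finally show ?thesis using D by (simp add: red_cap_def)
  next
    case (S v i)
    have "card {e \<in> Ep. a e = w} \<le> card {e \<in> Ep. w \<in> e}" using finEp a_ok by (intro card_mono) auto
    then show ?thesis using S by (simp add: red_cap_def gdeg_def)
  next
    case (L v i)
    have "card {e \<in> Ep. a e = w} \<le> card {e \<in> Ep. w \<in> e}" using finEp a_ok by (intro card_mono) auto
    then show ?thesis using L by (simp add: red_cap_def gdeg_def)
  next
    case (Leaf v i)
    have "card {e \<in> Ep. a e = w} \<le> card {e \<in> Ep. w \<in> e}" using finEp a_ok by (intro card_mono) auto
    then show ?thesis using Leaf by (simp add: red_cap_def gdeg_def)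
  qed
  have cvc: "capacitated_vertex_cover Vp Ep (red_cap B Ep) C"
    unfolding capacitated_vertex_cover_def using CVp a_ok cap by blast
  have cF: "card (F v) \<le> B + 2 + (if v \<in> Sd then 1 else 0)" for v
  proof -
    have "card (F v) \<le> card (if v \<in> Sd then L v ` {..<B+2} else S v ` {..<B+1}) + card {D v}"
      unfolding F_def by (rule card_Un_le)
    also have "\<dots> \<le> B + 2 + (if v \<in> Sd then 1 else 0)"
      using card_image_le[of "{..<B+2}" "L v"] card_image_le[of "{..<B+1}" "S v"] by auto
    finally show ?thesis .
  qed
  have "card C \<le> (\<Sum>v\<in>V. card (F v))" unfolding C_def using finV by (rule card_UN_le)
  also have "\<dots> \<le> (\<Sum>v\<in>V. B + 2 + (if v \<in> Sd then 1 else 0))" using cF by (intro sum_mono) auto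
  also have "\<dots> = (\<Sum>v\<in>V. B + 2) + (\<Sum>v\<in>V. (if v \<in> Sd then 1 else 0))"
    by (rule sum.distrib)
  also have "(\<Sum>v\<in>V. (if v \<in> Sd then 1 else 0)) = card (V \<inter> Sd)"
    using finV by (simp add: sum.If_cases Int_def)
  also have "V \<inter> Sd = Sd" using SdV by blast
  also have "(\<Sum>v\<in>V. B + 2) = card V * (B + 2)" by simp
  finally show ?thesis using cvc cSd by auto
qed

end


context red begin

lemma own_Vp: "x \<in> Vp \<Longrightarrow> own x \<in> V"
  unfolding Vp_alt by (auto simp: own_def)

lemma local_card:
  assumes C: "C \<subseteq> Vp" and cov: "\<forall>e\<in>Ep. \<exists>x\<in>e. x \<in> C" and vV: "v \<in> V"
  shows "{x \<in> C. own x = v} = S v ` {..<B+1} \<union> {D v} \<or> B + 3 \<le> card {x \<in> C. own x = v}"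
proof -
  let ?Cv = "{x \<in> C. own x = v}"
  let ?Sv = "S v ` {..<B+1}"
  let ?Lv = "L v ` {..<B+2}"
  let ?T = "?Sv \<union> {D v}"
  have finC: "finite C" using C finVp finite_subset by blast
  have finCv: "finite ?Cv" using finC by simp
  have cSv: "card ?Sv = B + 1" by (simp add: card_image inj_on_def)
  have cLv: "card ?Lv = B + 2" by (simp add: card_image inj_on_def)
  have inCv: "x \<in> C \<Longrightarrow> own x = v \<Longrightarrow> x \<in> ?Cv" for x by simp
  have leaf: "D v \<in> C \<or> Leaf v 0 \<in> C" using cov Lf_Ep[OF vV] by auto
  show ?thesis
  proof (cases "?Cv = ?T")
    case True then show ?thesis by blast
  next
    case neq: False
    show ?thesis
    proof (cases "?Sv \<subseteq> C")
      case SC: True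
      show ?thesis
      proof (cases "D v \<in> C")
        case True
        then have TCv: "?T \<subseteq> ?Cv" using SC by (auto simp: own_def)
        then obtain y where y: "y \<in> ?Cv" "y \<notin> ?T" using neq by blast
        have le: "card (insert y ?T) \<le> card ?Cv" using TCv y finCv by (intro card_mono) auto
        have "D v \<notin> ?Sv" by auto
        then have "card ?T = B + 2" using cSv by simp
        then have "card (insert y ?T) = B + 3" using y by simp
        then show ?thesis using le by simp
      next
        case False
        then have lf: "Leaf v 0 \<in> C" using leaf by simp
        have "v \<in> N v" by (rule N_self)
        then have "\<exists>x\<in>{L v (\<sigma> v v), D v}. x \<in> C" using cov Md_Ep[OF vV] by blast
        then have lc: "L v (\<sigma> v v) \<in> C" using False by auto
        have sub: "insert (Leaf v 0) (insert (L v (\<sigma> v v)) ?Sv) \<subseteq> ?Cv"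
          using SC lf lc by (auto simp: own_def)
        have n1: "L v (\<sigma> v v) \<notin> ?Sv" by auto
        have n2: "Leaf v 0 \<notin> insert (L v (\<sigma> v v)) ?Sv" by auto
        have "card (insert (Leaf v 0) (insert (L v (\<sigma> v v)) ?Sv)) = B + 3" using cSv n1 n2 by simp
        moreover have "card (insert (Leaf v 0) (insert (L v (\<sigma> v v)) ?Sv)) \<le> card ?Cv"
          using sub finCv by (rule card_mono[rotated])
        ultimately show ?thesis by simp
      qed
    next
      case False
      then obtain i where i: "i < B+1" "S v i \<notin> C" by auto
      have LC: "?Lv \<subseteq> C"
      proof
        fix x assume "x \<in> ?Lv"
        then obtain j where j: "j < B+2" "x = L v j" by auto
        have "\<exists>y\<in>{S v i, L v j}. y \<in> C" using cov Gd_Ep[OF vV i(1) j(1)] by blast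
        then show "x \<in> C" using i j by auto
      qed
      obtain z where z: "z \<in> C" "z \<in> {D v, Leaf v 0}" using leaf by blast
      have sub: "insert z ?Lv \<subseteq> ?Cv" using LC z by (auto simp: own_def)
      have "z \<notin> ?Lv" using z by auto
      then have "card (insert z ?Lv) = B + 3" using cLv by simp
      moreover have "card (insert z ?Lv) \<le> card ?Cv" using sub finCv by (rule card_mono[rotated])
      ultimately show ?thesis by simp
    qed
  qed
qed

end


context red begin

lemma bwd:
  assumes cvc: "capacitated_vertex_cover Vp Ep (red_cap B Ep) C"
    and cC: "card C \<le> card V * (B + 2) + k"
  shows "\<exists>Sd. dominating_set V E Sd \<and> card Sd \<le> k"
proof -
  have CVp: "C \<subseteq> Vp" using cvc by (simp add: capacitated_vertex_cover_def)
  obtain a where a_ok: "\<forall>e\<in>Ep. a e \<in> e \<and> a e \<in> C"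
    and a_cap: "\<forall>w\<in>C. card {e \<in> Ep. a e = w} \<le> red_cap B Ep w"
    using cvc unfolding capacitated_vertex_cover_def by blast
  have cov: "\<forall>e\<in>Ep. \<exists>x\<in>e. x \<in> C" using a_ok by blast
  define Cv where "Cv (v::'a) = {x \<in> C. own x = v}" for v
  define T where "T (v::'a) = S v ` {..<B+1} \<union> {D v}" for v
  define X where "X = {v \<in> V. Cv v \<noteq> T v}"
  have finC: "finite C" using CVp finVp finite_subset by blast
  have cT: "card (T v) = B + 2" for v
  proof -
    have "D v \<notin> S v ` {..<B+1}" by auto
    moreover have "card (S v ` {..<B+1}) = B + 1" by (simp add: card_image inj_on_def)
    ultimately show ?thesis by (simp add: T_def)
  qed
  have loc: "Cv v = T v \<or> B + 3 \<le> card (Cv v)" if "v \<in> V" for v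
    using local_card[OF CVp cov that] unfolding Cv_def T_def .
  have lower: "B + 2 + (if v \<in> X then 1 else 0) \<le> card (Cv v)" if "v \<in> V" for v
    using loc[OF that] cT[of v] that by (auto simp: X_def)
  have C_UN: "C = (\<Union>v\<in>V. Cv v)" using CVp own_Vp unfolding Cv_def by blast
  have "card C = (\<Sum>v\<in>V. card (Cv v))"
    unfolding C_UN
    by (rule card_UN_disjoint) (use finV finC in \<open>auto simp: Cv_def\<close>)
  moreover have "(\<Sum>v\<in>V. B + 2 + (if v \<in> X then 1 else 0)) \<le> (\<Sum>v\<in>V. card (Cv v))"
    using lower by (rule sum_mono)
  moreover have "(\<Sum>v\<in>V. B + 2 + (if v \<in> X then 1 else 0)) = card V * (B + 2) + card X"
  proof -
    have "(\<Sum>v\<in>V. B + 2 + (if v \<in> X then 1 else 0)) = (\<Sum>v\<in>V. B + 2) + (\<Sum>v\<in>V. (if v \<in> X then 1 else 0))"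
      by (rule sum.distrib)
    also have "(\<Sum>v\<in>V. (if v \<in> X then 1 else 0)) = card (V \<inter> X)"
      using finV by (simp add: sum.If_cases Int_def)
    also have "V \<inter> X = X" by (auto simp: X_def)
    finally show ?thesis by simp
  qed
  ultimately have cX: "card X \<le> k" using cC by linarith
  have XV: "X \<subseteq> V" by (auto simp: X_def)
  have domX: "dominating_set V E X"
    unfolding dominating_set_def
  proof (intro conjI XV ballI)
    fix u assume uV: "u \<in> V"
    show "u \<in> X \<or> (\<exists>v\<in>X. {v, u} \<in> E)"
    proof (rule ccontr)
      assume H: "\<not> (u \<in> X \<or> (\<exists>v\<in>X. {v, u} \<in> E))"
      have allT: "Cv v = T v" if "v \<in> N u" for v
      proof -
        have "v = u \<or> (v \<in> V \<and> {v, u} \<in> E)" using that by (auto simp: closed_nbhd_def)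
        then have "v \<in> V \<and> v \<notin> X" using H uV by auto
        then show ?thesis by (simp add: X_def)
      qed
      have notC: "x \<notin> C" if "own x \<in> N u" "x \<notin> T (own x)" for x
        using allT[OF that(1)] that(2) unfolding Cv_def by blast
      have DuC: "D u \<in> C" using allT[OF N_self[of u]] unfolding Cv_def T_def by (auto simp: own_def)
      have sub: "{e \<in> Ep. D u \<in> e} \<subseteq> {e \<in> Ep. a e = D u}"
      proof
        fix e assume e: "e \<in> {e \<in> Ep. D u \<in> e}"
        then have "e \<in> Lf u \<union> (\<lambda>v. {L v (\<sigma> v u), D u}) ` N u" using deg_D_set[OF uV] by simp
        then have "\<exists>y. e = {D u, y} \<and> y \<notin> C"
        proof
          assume "e \<in> Lf u"
          then obtain i where "e = {D u, Leaf u i}" by (auto simp: Lf_def)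
          moreover have "Leaf u i \<notin> C" using notC[of "Leaf u i"] N_self[of u] by (auto simp: own_def T_def)
          ultimately show ?thesis by blast
        next
          assume "e \<in> (\<lambda>v. {L v (\<sigma> v u), D u}) ` N u"
          then obtain v where v: "v \<in> N u" "e = {L v (\<sigma> v u), D u}" by auto
          moreover have "L v (\<sigma> v u) \<notin> C" using notC[of "L v (\<sigma> v u)"] v by (auto simp: own_def T_def)
          ultimately show ?thesis by blast
        qed
        then obtain y where "e = {D u, y}" "y \<notin> C" by blast
        then have "a e = D u" using a_ok e by auto
        then show "e \<in> {e \<in> Ep. a e = D u}" using e by simp
      qed
      have "B + 2 = card {e \<in> Ep. D u \<in> e}" using deg_D[OF uV] by (simp add: gdeg_def)
      also have "\<dots> \<le> card {e \<in> Ep. a e = D u}" using sub finEp by (intro card_mono) auto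
      also have "\<dots> \<le> B + 1" using a_cap DuC by (auto simp: red_cap_def)
      finally show False by simp
    qed
  qed
  show ?thesis using domX cX by blast
qed

end


theorem mainTheorem8:
  fixes V :: "'a set" and E :: "'a set set" and B k :: nat
    and \<sigma> :: "'a \<Rightarrow> 'a \<Rightarrow> nat"
  assumes graph: "simple_graph V E"
    and maxdeg: "\<forall>v\<in>V. gdeg E v \<le> B"
    and k: "k \<le> card V"
    and \<sigma>_range: "\<forall>v\<in>V. \<forall>u\<in>closed_nbhd V E v. \<sigma> v u < B + 2"
    and \<sigma>_inj: "\<forall>v\<in>V. inj_on (\<sigma> v) (closed_nbhd V E v)"
  shows "(\<forall>w\<in>red_vertices V E B. gdeg (red_edges V E B \<sigma>) w \<le> B + 2)
       \<and> (V \<noteq> {} \<longrightarrow> (\<exists>w\<in>red_vertices V E B. gdeg (red_edges V E B \<sigma>) w = B + 2))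
       \<and> card (red_edges V E B \<sigma>) = card V * (B + 2)^2
       \<and> ((\<exists>Sd. dominating_set V E Sd \<and> card Sd \<le> k) \<longleftrightarrow>
          (\<exists>C. capacitated_vertex_cover (red_vertices V E B) (red_edges V E B \<sigma>)
                 (red_cap B (red_edges V E B \<sigma>)) C
               \<and> card C \<le> card V * (B + 2) + k))"
proof -
  interpret red V E B \<sigma>
    by unfold_locales (use graph maxdeg \<sigma>_range \<sigma>_inj in auto)
  have ex: "V \<noteq> {} \<longrightarrow> (\<exists>w\<in>red_vertices V E B. gdeg (red_edges V E B \<sigma>) w = B + 2)"
  proof
    assume "V \<noteq> {}"
    then obtain v where v: "v \<in> V" by blast
    have "D v \<in> red_vertices V E B" unfolding Vp_alt using v by blast
    then show "\<exists>w\<in>red_vertices V E B. gdeg (red_edges V E B \<sigma>) w = B + 2" using deg_D[OF v] by blast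
  qed
  have iff: "(\<exists>Sd. dominating_set V E Sd \<and> card Sd \<le> k) \<longleftrightarrow>
          (\<exists>C. capacitated_vertex_cover (red_vertices V E B) (red_edges V E B \<sigma>)
                 (red_cap B (red_edges V E B \<sigma>)) C
               \<and> card C \<le> card V * (B + 2) + k)"
    using fwd bwd by blast
  show ?thesis using maxdeg_all ex card_Ep iff by blast
qed

end
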